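(* Let $\mathbf X$ be a $d$-dimensional continuous random vector with identical marginals. If $\mathbf X\in\mathrm{IC}^d$, then its correlation matrix coincides with its tail-dependence matrix, and also with its $\kappa_g$-matrix for every $g$ admissible for the standard uniform distribution.
   Context: For non-degenerate finite-variance $X,Y$, $(X,Y)$ has invariant correlation $r$ if $\mathrm{Corr}(X,Y)=\mathrm{Corr}(g(X),g(Y))=r$ for every measurable $g$ with $g(X),g(Y)$ non-degenerate of finite variance; $\mathbf X\in\mathrm{IC}^d$ means there is a matrix $R=(r_{ij})$ with $(X_i,X_j)$ having invariant correlation $r_{ij}$ for all $i,j$. For continuous $(X_i,X_j)$ with marginals $F_i,F_j$, the lower tail-dependence coefficient is $\lambda_{ij}=\lim_{u\downarrow0}\mathbb P(F_i(X_i)\le u,F_j(X_j)\le u)/u$; the tail-dependence matrix is $(\lambda_{ij})$. For $g:\mathbb R\to\mathbb R$, $\kappa_g(X_i,X_j)=\mathrm{Corr}(g(F_i(X_i)),g(F_j(X_j)))$ and the $\kappa_g$-matrix is $(\kappa_g(X_i,X_j))_{d\times d}$. $g$ is admissible for the standard uniform distribution if it is measurable and $g(U)$ is non-degenerate with finite variance for $U$ standard uniform. *)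

theory Defs
  imports "HOL-Probability.Probability"
begin

definition cov :: "'a measure \<Rightarrow> ('a \<Rightarrow> real) \<Rightarrow> ('a \<Rightarrow> real) \<Rightarrow> real" where
  "cov M X Y = (\<integral>\<omega>. (X \<omega> - (\<integral>\<eta>. X \<eta> \<partial>M)) * (Y \<omega> - (\<integral>\<eta>. Y \<eta> \<partial>M)) \<partial>M)"

definition var :: "'a measure \<Rightarrow> ('a \<Rightarrow> real) \<Rightarrow> real" where
  "var M X = cov M X X"

definition corr :: "'a measure \<Rightarrow> ('a \<Rightarrow> real) \<Rightarrow> ('a \<Rightarrow> real) \<Rightarrow> real" where
  "corr M X Y = cov M X Y / sqrt (var M X * var M Y)"

definition nondeg_fin_var :: "'a measure \<Rightarrow> ('a \<Rightarrow> real) \<Rightarrow> bool" where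
  "nondeg_fin_var M X \<longleftrightarrow>
     X \<in> borel_measurable M \<and> integrable M (\<lambda>\<omega>. (X \<omega>)\<^sup>2) \<and>
     \<not> (\<exists>c. AE \<omega> in M. X \<omega> = c)"

definition invariant_corr :: "'a measure \<Rightarrow> ('a \<Rightarrow> real) \<Rightarrow> ('a \<Rightarrow> real) \<Rightarrow> real \<Rightarrow> bool" where
  "invariant_corr M X Y r \<longleftrightarrow>
     nondeg_fin_var M X \<and> nondeg_fin_var M Y \<and> corr M X Y = r \<and>
     (\<forall>g. g \<in> borel_measurable borel \<longrightarrow>
          nondeg_fin_var M (g \<circ> X) \<longrightarrow> nondeg_fin_var M (g \<circ> Y) \<longrightarrow>
          corr M (g \<circ> X) (g \<circ> Y) = r)"

definition IC :: "'a measure \<Rightarrow> nat \<Rightarrow> (nat \<Rightarrow> 'a \<Rightarrow> real) \<Rightarrow> bool" where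
  "IC M d X \<longleftrightarrow> (\<exists>R :: nat \<Rightarrow> nat \<Rightarrow> real.
     \<forall>i<d. \<forall>j<d. invariant_corr M (X i) (X j) (R i j))"

definition marg_cdf :: "'a measure \<Rightarrow> ('a \<Rightarrow> real) \<Rightarrow> real \<Rightarrow> real" where
  "marg_cdf M X = cdf (distr M borel X)"

definition lower_tail_dep_is :: "'a measure \<Rightarrow> ('a \<Rightarrow> real) \<Rightarrow> ('a \<Rightarrow> real) \<Rightarrow> real \<Rightarrow> bool" where
  "lower_tail_dep_is M X Y l \<longleftrightarrow>
     ((\<lambda>u. measure M {\<omega> \<in> space M. marg_cdf M X (X \<omega>) \<le> u \<and> marg_cdf M Y (Y \<omega>) \<le> u} / u)
        \<longlongrightarrow> l) (at_right 0)"

definition kappa :: "(real \<Rightarrow> real) \<Rightarrow> 'a measure \<Rightarrow> ('a \<Rightarrow> real) \<Rightarrow> ('a \<Rightarrow> real) \<Rightarrow> real" where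
  "kappa g M X Y = corr M (\<lambda>\<omega>. g (marg_cdf M X (X \<omega>))) (\<lambda>\<omega>. g (marg_cdf M Y (Y \<omega>)))"

definition admissible_unif :: "(real \<Rightarrow> real) \<Rightarrow> bool" where
  "admissible_unif g \<longleftrightarrow> g \<in> borel_measurable borel \<and>
     nondeg_fin_var (uniform_measure lborel {0..1}) g"

end

theory Submission
  imports Defs
begin

lemma pit_level:
  assumes P: "prob_space M" and Y: "Y \<in> borel_measurable M"
    and cont: "\<And>x. isCont (marg_cdf M Y) x" and u: "0 < u" "u < 1"
  shows "\<exists>q. marg_cdf M Y q = u \<and> (\<forall>x. marg_cdf M Y x \<le> u \<longleftrightarrow> x \<le> q)"
proof -
  interpret prob_space M by fact
  define N where "N = distr M borel Y"
  interpret N: real_distribution N unfolding N_def using Y by simp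
  define F where "F = marg_cdf M Y"
  have F: "F = cdf N" unfolding F_def N_def marg_cdf_def ..
  have mono: "x \<le> y \<Longrightarrow> F x \<le> F y" for x y unfolding F by (rule N.cdf_nondecreasing)
  have "eventually (\<lambda>x. F x < u) at_bot"
    using N.cdf_lim_at_bot u unfolding F by (simp add: order_tendsto_iff)
  then obtain a where a: "F a < u" by (metis eventually_at_bot_linorder order_refl)
  have "eventually (\<lambda>x. F x > u) at_top"
    using N.cdf_lim_at_top_prob u unfolding F by (simp add: order_tendsto_iff)
  then obtain b where b: "\<And>x. x \<ge> b \<Longrightarrow> F x > u" by (auto simp: eventually_at_top_linorder)
  define S where "S = {x. F x \<le> u}"
  have ne: "S \<noteq> {}" using a S_def by (auto intro!: exI[of _ a])
  have bdd: "bdd_above S" unfolding S_def bdd_above_def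
    by (metis b linorder_not_le mem_Collect_eq order_less_imp_le)
  have contF: "continuous_on UNIV F" using cont F_def by (simp add: continuous_at_imp_continuous_on)
  have cl: "closed S" unfolding S_def
    using closed_Collect_le[OF contF continuous_on_const] by simp
  define q where "q = Sup S"
  have qS: "q \<in> S" unfolding q_def by (rule closed_contains_Sup[OF ne bdd cl])
  have up: "x \<in> S \<Longrightarrow> x \<le> q" for x unfolding q_def using bdd by (simp add: cSup_upper)
  have Fq: "F q = u"
  proof (rule ccontr)
    assume "F q \<noteq> u"
    with qS have lt: "F q < u" by (auto simp: S_def)
    have "eventually (\<lambda>x. F x < u) (at q)"
      using cont[of q] lt unfolding F_def isCont_def by (simp add: order_tendsto_iff)
    then obtain d where d: "d > 0" "\<And>x. x \<noteq> q \<Longrightarrow> dist x q < d \<Longrightarrow> F x < u"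
      by (auto simp: eventually_at)
    have "F (q + d/2) < u" using d by (intro d(2)) (auto simp: dist_real_def)
    hence "q + d/2 \<le> q" by (intro up) (auto simp: S_def)
    with d show False by simp
  qed
  show ?thesis
    apply (rule exI[of _ q])
    using Fq up mono[of _ q] unfolding S_def F_def by auto
qed

lemma marg_cdf_bounds:
  assumes P: "prob_space M" and Y: "Y \<in> borel_measurable M"
  shows "0 \<le> marg_cdf M Y x" "marg_cdf M Y x \<le> 1"
proof -
  interpret prob_space M by fact
  interpret N: real_distribution "distr M borel Y" using Y by simp
  show "0 \<le> marg_cdf M Y x" "marg_cdf M Y x \<le> 1" unfolding marg_cdf_def
    using N.cdf_nonneg N.cdf_bounded_prob by auto
qed

lemma marg_cdf_meas:
  assumes "\<And>x. isCont (marg_cdf M Y) x"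
  shows "marg_cdf M Y \<in> borel_measurable borel"
  using assms by (intro borel_measurable_continuous_onI continuous_at_imp_continuous_on) auto

lemma pit_measure:
  assumes P: "prob_space M" and Y: "Y \<in> borel_measurable M"
    and cont: "\<And>x. isCont (marg_cdf M Y) x" and u: "0 < u" "u < 1"
  shows "measure M {\<omega>\<in>space M. marg_cdf M Y (Y \<omega>) \<le> u} = u"
proof -
  obtain q where q: "marg_cdf M Y q = u" "\<And>x. marg_cdf M Y x \<le> u \<longleftrightarrow> x \<le> q"
    using pit_level[OF assms] by blast
  have "{\<omega>\<in>space M. marg_cdf M Y (Y \<omega>) \<le> u} = Y -` {..q} \<inter> space M"
    using q(2) by auto
  also have "measure M \<dots> = measure (distr M borel Y) {..q}"
    using Y by (simp add: measure_distr)
  also have "\<dots> = u" using q(1) by (simp add: marg_cdf_def cdf_def)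
  finally show ?thesis .
qed

lemma pit_distr:
  assumes P: "prob_space M" and Y: "Y \<in> borel_measurable M"
    and cont: "\<And>x. isCont (marg_cdf M Y) x"
  shows "distr M borel (\<lambda>\<omega>. marg_cdf M Y (Y \<omega>)) = uniform_measure lborel {0..1}"
proof -
  interpret prob_space M by fact
  define Z where "Z = (\<lambda>\<omega>. marg_cdf M Y (Y \<omega>))"
  have Zm: "Z \<in> borel_measurable M" unfolding Z_def
    using measurable_compose[OF Y marg_cdf_meas[OF cont]] by (simp add: comp_def)
  have R1: "real_distribution (distr M borel Z)" using Zm by simp
  have R2: "real_distribution (uniform_measure lborel {0..1::real})"
    unfolding real_distribution_def real_distribution_axioms_def
    by (auto intro!: prob_space_uniform_measure)
  have cdfZ: "cdf (distr M borel Z) u = measure M {\<omega>\<in>space M. Z \<omega> \<le> u}" for u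
    unfolding cdf_def measure_distr[OF Zm atMost_borel] by (rule arg_cong[where f="measure M"]) auto
  have cdfU: "cdf (uniform_measure lborel {0..1::real}) u = measure lborel ({0..1} \<inter> {..u})" for u
    by (simp add: cdf_def)
  have "cdf (distr M borel Z) u = cdf (uniform_measure lborel {0..1::real}) u" for u
  proof -
    consider "u < 0" | "u = 0" | "0 < u \<and> u < 1" | "1 \<le> u" by linarith
    then show ?thesis
    proof cases
      case 1
      have E1: "{\<omega>\<in>space M. Z \<omega> \<le> u} = {}" using marg_cdf_bounds(1)[OF P Y] 1 unfolding Z_def
        by (auto simp: not_le intro: less_le_trans)
      have E2: "{0..1} \<inter> {..u} = {}" using 1 by auto
      show ?thesis unfolding cdfZ cdfU E1 E2 by simp
    next
      case 2
      have "measure M {\<omega>\<in>space M. Z \<omega> \<le> 0} \<le> 0"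
      proof (rule field_le_epsilon)
        fix e :: real assume e: "0 < e"
        define v where "v = min e (1/2)"
        have "measure M {\<omega>\<in>space M. Z \<omega> \<le> 0} \<le> measure M {\<omega>\<in>space M. Z \<omega> \<le> v}"
          using Zm e by (intro finite_measure_mono) (auto simp: v_def)
        also have "\<dots> = v" unfolding Z_def using e by (intro pit_measure[OF P Y cont]) (auto simp: v_def)
        finally show "measure M {\<omega>\<in>space M. Z \<omega> \<le> 0} \<le> 0 + e" by (simp add: v_def)
      qed
      hence E1: "measure M {\<omega>\<in>space M. Z \<omega> \<le> 0} = 0" using measure_nonneg antisym by blast
      have E2: "{0..1} \<inter> {..0::real} = {0}" by auto
      show ?thesis unfolding 2 cdfZ cdfU E1 E2 by simp
    next
      case 3
      have E2: "{0..1} \<inter> {..u} = {0..u}" using 3 by auto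
      show ?thesis unfolding cdfZ cdfU E2 using 3 pit_measure[OF P Y cont, of u] by (simp add: Z_def)
    next
      case 4
      have E1: "{\<omega>\<in>space M. Z \<omega> \<le> u} = space M" using marg_cdf_bounds(2)[OF P Y] 4 unfolding Z_def
        by (auto intro: order_trans)
      have E2: "{0..1} \<inter> {..u} = {0..1::real}" using 4 by auto
      show ?thesis unfolding cdfZ cdfU E1 E2 by (simp add: prob_space)
    qed
  qed
  then show ?thesis unfolding Z_def[symmetric] by (intro cdf_unique[OF R1 R2] ext)
qed

lemma transfer_nondeg:
  assumes Z: "Z \<in> borel_measurable M" and D: "distr M borel Z = U"
    and gb: "g \<in> borel_measurable borel" and g: "nondeg_fin_var U g"
  shows "nondeg_fin_var M (\<lambda>\<omega>. g (Z \<omega>))"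
proof -
  have m: "(\<lambda>\<omega>. g (Z \<omega>)) \<in> borel_measurable M" using Z gb by measurable
  have "integrable U (\<lambda>x. (g x)\<^sup>2)" using g by (simp add: nondeg_fin_var_def)
  hence i: "integrable M (\<lambda>\<omega>. (g (Z \<omega>))\<^sup>2)"
    unfolding D[symmetric] using integrable_distr_eq[OF Z, of "\<lambda>x. (g x)\<^sup>2"] gb by simp
  have na: "\<not> (AE \<omega> in M. g (Z \<omega>) = c)" for c
  proof
    assume "AE \<omega> in M. g (Z \<omega>) = c"
    moreover have "{x \<in> space borel. g x = c} \<in> sets borel" using gb by measurable
    ultimately have "AE x in distr M borel Z. g x = c" using AE_distr_iff[OF Z, of "\<lambda>x. g x = c"] by blast
    thus False using g unfolding D nondeg_fin_var_def by blast
  qed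
  show ?thesis unfolding nondeg_fin_var_def using m i na by blast
qed

lemma nondeg_cong:
  assumes "\<And>\<omega>. \<omega> \<in> space M \<Longrightarrow> f \<omega> = h \<omega>"
  shows "nondeg_fin_var M f = nondeg_fin_var M h"
proof -
  have "f \<in> borel_measurable M \<longleftrightarrow> h \<in> borel_measurable M" using assms by (rule measurable_cong)
  moreover have "integrable M (\<lambda>\<omega>. (f \<omega>)\<^sup>2) \<longleftrightarrow> integrable M (\<lambda>\<omega>. (h \<omega>)\<^sup>2)"
    apply (rule Bochner_Integration.integrable_cong[OF refl]) using assms by simp
  moreover have "(AE \<omega> in M. f \<omega> = c) \<longleftrightarrow> (AE \<omega> in M. h \<omega> = c)" for c
    using assms by (intro AE_cong) auto
  ultimately show ?thesis unfolding nondeg_fin_var_def by simp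
qed

lemma corr_cong:
  assumes "\<And>\<omega>. \<omega> \<in> space M \<Longrightarrow> f \<omega> = f' \<omega>" "\<And>\<omega>. \<omega> \<in> space M \<Longrightarrow> h \<omega> = h' \<omega>"
  shows "corr M f h = corr M f' h'"
proof -
  have e1: "(\<integral>\<eta>. f \<eta> \<partial>M) = (\<integral>\<eta>. f' \<eta> \<partial>M)" "(\<integral>\<eta>. h \<eta> \<partial>M) = (\<integral>\<eta>. h' \<eta> \<partial>M)"
    using assms by (auto intro: Bochner_Integration.integral_cong)
  have "cov M a b = cov M a' b'" if "\<And>\<omega>. \<omega> \<in> space M \<Longrightarrow> a \<omega> = a' \<omega>" "\<And>\<omega>. \<omega> \<in> space M \<Longrightarrow> b \<omega> = b' \<omega>" for a a' b b'
  proof -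
    have "(\<integral>\<eta>. a \<eta> \<partial>M) = (\<integral>\<eta>. a' \<eta> \<partial>M)" "(\<integral>\<eta>. b \<eta> \<partial>M) = (\<integral>\<eta>. b' \<eta> \<partial>M)"
      using that by (auto intro: Bochner_Integration.integral_cong)
    then show ?thesis unfolding cov_def using that by (auto intro: Bochner_Integration.integral_cong)
  qed
  then have "cov M f h = cov M f' h'" "cov M f f = cov M f' f'" "cov M h h = cov M h' h'"
    using assms by blast+
  then show ?thesis unfolding corr_def var_def by simp
qed

lemma ind_lemma:
  assumes P: "prob_space M" and A: "A \<in> sets M" and B: "B \<in> sets M"
    and pA: "measure M A = u" and pB: "measure M B = u" and u: "0 < u" "u < 1"
  shows "nondeg_fin_var M (indicator A :: _ \<Rightarrow> real)"
    and "corr M (indicator A :: _ \<Rightarrow> real) (indicator B) = (measure M (A \<inter> B) - u\<^sup>2) / (u * (1 - u))"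
proof -
  interpret prob_space M by fact
  have sq: "(\<lambda>\<omega>. (indicator A \<omega> :: real)\<^sup>2) = indicator A" by (auto simp: indicator_def fun_eq_iff)
  have iA: "integrable M (indicator A :: _ \<Rightarrow> real)" using A by (intro integrable_real_indicator) (auto simp: emeasure_eq_measure)
  have iB: "integrable M (indicator B :: _ \<Rightarrow> real)" using B by (intro integrable_real_indicator) (auto simp: emeasure_eq_measure)
  have iAB: "integrable M (indicator (A \<inter> B) :: _ \<Rightarrow> real)" using A B by (intro integrable_real_indicator) (auto simp: emeasure_eq_measure)
  have na: "\<not> (AE \<omega> in M. (indicator A \<omega> :: real) = c)" for c
  proof
    assume ae: "AE \<omega> in M. (indicator A \<omega> :: real) = c"
    show False
    proof (cases "c = 1")
      case True
      hence "AE \<omega> in M. \<omega> \<in> A" using ae by (auto elim!: eventually_mono simp: indicator_def split: if_splits)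
      hence "prob A = 1" using A by (simp add: AE_in_set_eq_1)
      thus False using pA u by simp
    next
      case False
      hence "AE \<omega> in M. \<omega> \<in> space M - A" using ae by (auto elim!: eventually_mono simp: indicator_def split: if_splits)
      hence "prob (space M - A) = 1" using A by (subst AE_in_set_eq_1[symmetric]) auto
      thus False using pA u A by (simp add: prob_compl)
    qed
  qed
  show "nondeg_fin_var M (indicator A :: _ \<Rightarrow> real)"
    unfolding nondeg_fin_var_def sq using A iA na by simp
  have EA: "(\<integral>\<eta>. indicator A \<eta> \<partial>M) = u" using A pA by (simp add: Int_absorb2 sets.sets_into_space)
  have EB: "(\<integral>\<eta>. indicator B \<eta> \<partial>M) = u" using B pB by (simp add: Int_absorb2 sets.sets_into_space)
  have EAB: "(\<integral>\<eta>. indicator (A \<inter> B) \<eta> \<partial>M) = measure M (A \<inter> B)" using A B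
    by (simp add: Int_absorb2 sets.sets_into_space)
  have pw: "(indicator C x - u) * (indicator D x - u) =
      indicator (C \<inter> D) x - u * indicator C x - u * indicator D x + (u\<^sup>2::real)" for C D x
    by (auto simp: indicator_def algebra_simps power2_eq_square)
  have c: "cov M (indicator A) (indicator B) = measure M (A \<inter> B) - u\<^sup>2"
  proof -
    have "cov M (indicator A) (indicator B) =
      (\<integral>x. indicator (A \<inter> B) x - u * indicator A x - u * indicator B x + u\<^sup>2 \<partial>M)"
      unfolding cov_def EA EB pw[of A _ B] ..
    also have "\<dots> = measure M (A \<inter> B) - u * u - u * u + u\<^sup>2"
      using iA iB iAB EA EB EAB by (simp add: prob_space)
    finally show ?thesis by (simp add: power2_eq_square)
  qed
  have cA: "cov M (indicator A) (indicator A) = u * (1 - u)"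
  proof -
    have "cov M (indicator A) (indicator A) =
      (\<integral>x. indicator (A \<inter> A) x - u * indicator A x - u * indicator A x + u\<^sup>2 \<partial>M)"
      unfolding cov_def EA pw[of A _ A] ..
    also have "\<dots> = u - u * u - u * u + u\<^sup>2"
      using iA EA by (simp add: prob_space)
    finally show ?thesis by (simp add: power2_eq_square algebra_simps)
  qed
  have cB: "cov M (indicator B) (indicator B) = u * (1 - u)"
  proof -
    have "cov M (indicator B) (indicator B) =
      (\<integral>x. indicator (B \<inter> B) x - u * indicator B x - u * indicator B x + u\<^sup>2 \<partial>M)"
      unfolding cov_def EB pw[of B _ B] ..
    also have "\<dots> = u - u * u - u * u + u\<^sup>2"
      using iB EB by (simp add: prob_space)
    finally show ?thesis by (simp add: power2_eq_square algebra_simps)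
  qed
  have sq2: "sqrt (u * (1 - u) * (u * (1 - u))) = u * (1 - u)" using u by (simp add: real_sqrt_mult_self)
  show "corr M (indicator A :: _ \<Rightarrow> real) (indicator B) = (measure M (A \<inter> B) - u\<^sup>2) / (u * (1 - u))"
    by (unfold corr_def var_def c cA cB sq2) (rule refl)
qed

theorem proposition10:
  fixes M :: "'a measure" and d :: nat and X :: "nat \<Rightarrow> 'a \<Rightarrow> real"
  assumes "prob_space M"
    and rv: "\<And>i. i < d \<Longrightarrow> X i \<in> borel_measurable M"
    and continuous: "\<And>i x. i < d \<Longrightarrow> isCont (marg_cdf M (X i)) x"
    and identical: "\<And>i j. i < d \<Longrightarrow> j < d \<Longrightarrow> distr M borel (X i) = distr M borel (X j)"
    and "IC M d X"
  shows "(\<forall>i<d. \<forall>j<d. lower_tail_dep_is M (X i) (X j) (corr M (X i) (X j)))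
       \<and> (\<forall>g. admissible_unif g \<longrightarrow>
             (\<forall>i<d. \<forall>j<d. corr M (X i) (X j) = kappa g M (X i) (X j)))"
proof -
  note P = \<open>prob_space M\<close>
  interpret prob_space M by fact
  obtain R where R: "\<And>i j. i < d \<Longrightarrow> j < d \<Longrightarrow> invariant_corr M (X i) (X j) (R i j)"
    using \<open>IC M d X\<close> unfolding IC_def by blast
  have Fe: "marg_cdf M (X j) = marg_cdf M (X i)" if "i < d" "j < d" for i j
    unfolding marg_cdf_def using identical[OF that] by simp
  have part1: "lower_tail_dep_is M (X i) (X j) (corr M (X i) (X j))" if ij: "i < d" "j < d" for i j
  proof -
    define F where "F = marg_cdf M (X i)"
    define r where "r = R i j"
    have inv: "invariant_corr M (X i) (X j) r" unfolding r_def using R ij by blast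
    hence cr: "corr M (X i) (X j) = r" unfolding invariant_corr_def by blast
    have Fm[measurable]: "F \<in> borel_measurable borel" unfolding F_def using continuous[OF ij(1)]
      by (rule marg_cdf_meas)
    have Xi[measurable]: "X i \<in> borel_measurable M" using rv ij by blast
    have Xj[measurable]: "X j \<in> borel_measurable M" using rv ij by blast
    have Fj: "marg_cdf M (X j) = F" unfolding F_def using Fe[OF ij] .
    have key: "measure M {\<omega> \<in> space M. F (X i \<omega>) \<le> u \<and> F (X j \<omega>) \<le> u} / u = r * (1 - u) + u"
      if u: "0 < u" "u < 1" for u
    proof -
      define g where "g = (\<lambda>x. if F x \<le> u then 1 else (0::real))"
      have gm: "g \<in> borel_measurable borel" unfolding g_def by measurable
      define A where "A = {\<omega> \<in> space M. F (X i \<omega>) \<le> u}"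
      define B where "B = {\<omega> \<in> space M. F (X j \<omega>) \<le> u}"
      have As: "A \<in> sets M" unfolding A_def by measurable
      have Bs: "B \<in> sets M" unfolding B_def by measurable
      have pA: "measure M A = u" unfolding A_def F_def
        using pit_measure[OF P Xi continuous[OF ij(1)] u] .
      have pB: "measure M B = u" unfolding B_def Fj[symmetric]
        using pit_measure[OF P Xj continuous[OF ij(2)] u] .
      have eA: "(g \<circ> X i) \<omega> = indicator A \<omega>" if "\<omega> \<in> space M" for \<omega>
        using that unfolding g_def A_def by (simp add: indicator_def)
      have eB: "(g \<circ> X j) \<omega> = indicator B \<omega>" if "\<omega> \<in> space M" for \<omega>
        using that unfolding g_def B_def by (simp add: indicator_def)
      have n1: "nondeg_fin_var M (g \<circ> X i)"
        using nondeg_cong[of M "g \<circ> X i" "indicator A", OF eA] ind_lemma(1)[OF P As Bs pA pB u] by blast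
      have n2: "nondeg_fin_var M (g \<circ> X j)"
        using nondeg_cong[of M "g \<circ> X j" "indicator B", OF eB] ind_lemma(1)[OF P Bs As pB pA u] by blast
      have "r = corr M (g \<circ> X i) (g \<circ> X j)"
        using inv gm n1 n2 unfolding invariant_corr_def by simp
      also have "\<dots> = corr M (indicator A) (indicator B)"
        using eA eB by (rule corr_cong)
      also have "\<dots> = (measure M (A \<inter> B) - u\<^sup>2) / (u * (1 - u))"
        by (rule ind_lemma(2)[OF P As Bs pA pB u])
      finally have "measure M (A \<inter> B) = r * (u * (1 - u)) + u\<^sup>2"
        using u by (simp add: field_simps)
      moreover have "A \<inter> B = {\<omega> \<in> space M. F (X i \<omega>) \<le> u \<and> F (X j \<omega>) \<le> u}"
        unfolding A_def B_def by auto
      ultimately show ?thesis using u by (simp add: field_simps power2_eq_square)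
    qed
    have ev: "eventually (\<lambda>u. r * (1 - u) + u =
        measure M {\<omega> \<in> space M. F (X i \<omega>) \<le> u \<and> F (X j \<omega>) \<le> u} / u) (at_right (0::real))"
      unfolding eventually_at_right[OF zero_less_one] using key by (intro exI[of _ 1]) auto
    have "((\<lambda>u. r * (1 - u) + u) \<longlongrightarrow> r * (1 - 0) + 0) (at_right (0::real))"
      by (intro tendsto_intros)
    hence "((\<lambda>u. r * (1 - u) + u) \<longlongrightarrow> r) (at_right (0::real))" by simp
    hence "((\<lambda>u. measure M {\<omega> \<in> space M. F (X i \<omega>) \<le> u \<and> F (X j \<omega>) \<le> u} / u) \<longlongrightarrow> r) (at_right 0)"
      using ev by (rule Lim_transform_eventually)
    then show ?thesis unfolding lower_tail_dep_is_def cr Fj F_def .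
  qed
  have part2: "corr M (X i) (X j) = kappa g M (X i) (X j)"
    if g: "admissible_unif g" and ij: "i < d" "j < d" for g i j
  proof -
    define F where "F = marg_cdf M (X i)"
    define r where "r = R i j"
    have inv: "invariant_corr M (X i) (X j) r" unfolding r_def using R ij by blast
    hence cr: "corr M (X i) (X j) = r" unfolding invariant_corr_def by blast
    have Fm[measurable]: "F \<in> borel_measurable borel" unfolding F_def using continuous[OF ij(1)]
      by (rule marg_cdf_meas)
    have gb[measurable]: "g \<in> borel_measurable borel" using g unfolding admissible_unif_def by blast
    have gn: "nondeg_fin_var (uniform_measure lborel {0..1}) g" using g unfolding admissible_unif_def by blast
    have Xi[measurable]: "X i \<in> borel_measurable M" using rv ij by blast
    have Xj[measurable]: "X j \<in> borel_measurable M" using rv ij by blast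
    have Fj: "marg_cdf M (X j) = F" unfolding F_def using Fe[OF ij] .
    have hm: "g \<circ> F \<in> borel_measurable borel" by measurable
    have Di: "distr M borel (\<lambda>\<omega>. F (X i \<omega>)) = uniform_measure lborel {0..1}"
      unfolding F_def by (rule pit_distr[OF P Xi continuous[OF ij(1)]])
    have Dj: "distr M borel (\<lambda>\<omega>. F (X j \<omega>)) = uniform_measure lborel {0..1}"
      unfolding Fj[symmetric] by (rule pit_distr[OF P Xj continuous[OF ij(2)]])
    have n1: "nondeg_fin_var M (g \<circ> F \<circ> X i)"
      using transfer_nondeg[OF _ Di gb gn] by (simp add: comp_def)
    have n2: "nondeg_fin_var M (g \<circ> F \<circ> X j)"
      using transfer_nondeg[OF _ Dj gb gn] by (simp add: comp_def)
    have "corr M (g \<circ> F \<circ> X i) (g \<circ> F \<circ> X j) = r"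
      using inv hm n1 n2 unfolding invariant_corr_def by blast
    then show ?thesis unfolding kappa_def cr Fj F_def[symmetric] by (simp add: comp_def)
  qed
  show ?thesis using part1 part2 by blast
qed

end
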